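(* Let $1<\beta\le2$. The indicator function $\chi_{[1/\beta,1]}$ on $[0,1]$ is not of the form $\chi_{[1/\beta,1]}=c+\psi\circ\tau_\beta-\psi$ ($m_\beta$-almost everywhere) for any constant $c\in\mathbb R$ and any function $\psi:[0,1]\to\mathbb R$ of bounded variation.
   Context: The beta-map is $\tau_\beta(x)=\beta x-[\beta x]$ on $[0,1]$, where $[y]$ is the integer part of $y$; $m_\beta$ is its unique invariant Borel probability measure absolutely continuous with respect to Lebesgue measure. $\chi_A$ denotes the indicator function of $A$. *)

theory Defs
  imports "HOL-Probability.Probability"
begin

definition beta_map :: "real \<Rightarrow> real \<Rightarrow> real" where
  "beta_map \<beta> x = \<beta> * x - of_int \<lfloor>\<beta> * x\<rfloor>"

definition bounded_variation_on :: "(real \<Rightarrow> real) \<Rightarrow> real \<Rightarrow> real \<Rightarrow> bool" where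
  "bounded_variation_on \<psi> a b \<longleftrightarrow>
     (\<exists>B. \<forall>(n::nat) (x::nat \<Rightarrow> real).
        x 0 = a \<and> x n = b \<and> (\<forall>i<n. x i \<le> x (Suc i)) \<longrightarrow>
        (\<Sum>i<n. \<bar>\<psi> (x (Suc i)) - \<psi> (x i)\<bar>) \<le> B)"

text \<open>m is a tau_beta-invariant Borel probability measure on [0,1],
  absolutely continuous w.r.t. Lebesgue measure (this measure is unique, so
  m is m_beta).\<close>
definition is_beta_acim :: "real \<Rightarrow> real measure \<Rightarrow> bool" where
  "is_beta_acim \<beta> m \<longleftrightarrow>
     prob_space m \<and>
     sets m = sets (restrict_space borel {0..1}) \<and>
     absolutely_continuous (restrict_space lborel {0..1}) m \<and>
     beta_map \<beta> \<in> measurable m m \<and>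
     (\<forall>A\<in>sets m. emeasure m (beta_map \<beta> -` A \<inter> space m) = emeasure m A)"

end

theory Submission
  imports Defs
begin


lemma fm_real: fixes S :: "real set"
  assumes "S \<in> sets borel" "S \<subseteq> {a..b}" shows "S \<in> fmeasurable lborel"
  by (rule fmeasurableI2[OF fmeasurable_cbox[of a b]]) (use assms in auto)

lemma affine_pre:
  fixes \<beta> k :: real and B :: "real set"
  assumes "\<beta> > 0" "B \<in> sets borel"
  shows "measure lborel B = \<beta> * measure lborel ((\<lambda>x. \<beta>*x - k) -` B)"
proof -
  have e: "lborel = density (distr lborel borel (\<lambda>x. (-k) + \<beta> * x)) (\<lambda>_. ennreal \<bar>\<beta>\<bar>)"
    using lborel_real_affine[of \<beta> "-k"] assms by simp
  have "emeasure lborel B = emeasure (density (distr lborel borel (\<lambda>x. (-k) + \<beta> * x)) (\<lambda>_. ennreal \<bar>\<beta>\<bar>)) B"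
    by (subst e[symmetric]) simp
  also have "\<dots> = ennreal \<beta> * emeasure (distr lborel borel (\<lambda>x. (-k) + \<beta> * x)) B"
    using assms by (simp add: emeasure_density_const)
  also have "\<dots> = ennreal \<beta> * emeasure lborel ((\<lambda>x. \<beta>*x - k) -` B)"
    using assms by (simp add: emeasure_distr)
  finally show ?thesis unfolding measure_def using assms by (simp add: enn2real_mult)
qed



lemma mIco: fixes l u :: real shows "l \<le> u \<Longrightarrow> measure lborel {l..<u} = u - l"
  by (simp add: measure_def)

lemma mIco_fm: fixes l u :: real shows "{l..<u} \<in> fmeasurable lborel"
  by (rule fm_real[of _ l u]) auto

lemma mle: fixes A :: "real set"
  assumes "A \<in> sets borel" "u \<le> v" shows "measure lborel (A \<inter> {u..<v}) \<le> v - u"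
proof -
  have "measure lborel (A \<inter> {u..<v}) \<le> measure lborel {u..<v}"
    by (rule measure_mono_fmeasurable) (use assms mIco_fm in auto)
  then show ?thesis using mIco[OF assms(2)] by simp
qed

lemma msplit: fixes A :: "real set"
  assumes "A \<in> sets borel" "u \<le> w" "w \<le> v"
  shows "measure lborel (A \<inter> {u..<v}) = measure lborel (A \<inter> {u..<w}) + measure lborel (A \<inter> {w..<v})"
proof -
  have "A \<inter> {u..<v} = (A \<inter> {u..<w}) \<union> (A \<inter> {w..<v})" using assms by auto
  moreover have "measure lborel ((A \<inter> {u..<w}) \<union> (A \<inter> {w..<v})) = measure lborel (A \<inter> {u..<w}) + measure lborel (A \<inter> {w..<v})"
    apply (rule measure_Union)
    using fmeasurableI2[OF mIco_fm[of u w], of "A \<inter> {u..<w}"] fmeasurableI2[OF mIco_fm[of w v], of "A \<inter> {w..<v}"] assms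
    by (auto simp: fmeasurable_def)
  ultimately show ?thesis by simp
qed

lemma push:
  fixes A :: "real set"
  assumes "\<beta> > 0" "A \<in> sets borel" "a \<le> b" "\<And>x. x \<in> A \<Longrightarrow> a \<le> x \<Longrightarrow> x < b \<Longrightarrow> \<beta>*x - k \<in> A"
  shows "\<beta> * measure lborel (A \<inter> {a..<b}) \<le> measure lborel (A \<inter> {\<beta>*a-k..<\<beta>*b-k})"
proof -
  let ?B = "A \<inter> {\<beta>*a-k..<\<beta>*b-k}"
  have Bb: "?B \<in> sets borel" using assms by auto
  have fb: "(\<lambda>x. \<beta>*x - k) \<in> borel_measurable borel" by simp
  have pre_b: "(\<lambda>x. \<beta>*x - k) -` ?B \<in> sets borel" using measurable_sets[OF fb Bb] by simp
  have sub: "A \<inter> {a..<b} \<subseteq> (\<lambda>x. \<beta>*x-k) -` ?B"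
  proof
    fix x assume x: "x \<in> A \<inter> {a..<b}"
    have "\<beta>*a \<le> \<beta>*x" using x assms(1) by (intro mult_left_mono) auto
    moreover have "\<beta>*x < \<beta>*b" using x assms(1) by (intro mult_strict_left_mono) auto
    moreover have "\<beta>*x - k \<in> A" using x assms(4) by auto
    ultimately show "x \<in> (\<lambda>x. \<beta>*x-k) -` ?B" by simp
  qed
  have sub2: "(\<lambda>x. \<beta>*x-k) -` ?B \<subseteq> {a..b}"
  proof
    fix x assume x: "x \<in> (\<lambda>x. \<beta>*x-k) -` ?B"
    then have "\<beta>*a \<le> \<beta>*x" "\<beta>*x \<le> \<beta>*b" by simp_all
    then show "x \<in> {a..b}" using assms(1) by (simp add: mult_le_cancel_left_pos)
  qed
  have "measure lborel (A \<inter> {a..<b}) \<le> measure lborel ((\<lambda>x. \<beta>*x-k) -` ?B)"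
    by (rule measure_mono_fmeasurable[OF sub _ fm_real[OF pre_b sub2]]) (use assms(2) in simp)
  then have "\<beta> * measure lborel (A \<inter> {a..<b}) \<le> \<beta> * measure lborel ((\<lambda>x. \<beta>*x-k) -` ?B)"
    using assms by simp
  also have "\<dots> = measure lborel ?B" using affine_pre[OF assms(1) Bb, of k] by simp
  finally show ?thesis .
qed

lemma step:
  fixes A :: "real set" and T :: "real \<Rightarrow> real"
  assumes b1: "1 < \<beta>" and b2: "\<beta> \<le> 2" and A: "A \<in> sets borel" and inv: "\<And>x. x\<in>A \<Longrightarrow> T x \<in> A"
   and hole: "\<And>x. x \<in> A \<Longrightarrow> \<epsilon> \<le> x"
   and T0: "\<And>x. 0 \<le> x \<Longrightarrow> x < 1/\<beta> \<Longrightarrow> T x = \<beta>*x"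
   and T1: "\<And>x. 1/\<beta> \<le> x \<Longrightarrow> x < 1 \<Longrightarrow> T x = \<beta>*x - 1"
   and th: "0 < \<theta>" "\<theta> < \<epsilon>/\<beta>" "\<theta> < 1"
   and uv: "0 \<le> u" "u < v" "v \<le> 1" and d: "(1-\<theta>)*(v-u) \<le> measure lborel (A \<inter> {u..<v})"
  shows "\<exists>u' v'. 0 \<le> u' \<and> u' < v' \<and> v' \<le> 1 \<and> (1-\<theta>)*(v'-u') \<le> measure lborel (A \<inter> {u'..<v'})
            \<and> \<beta>*(1-\<theta>)*(v-u) \<le> v'-u'"
proof (cases "1/\<beta> \<le> u")
  case True
  have p: "\<beta> * measure lborel (A \<inter> {u..<v}) \<le> measure lborel (A \<inter> {\<beta>*u-1..<\<beta>* v-1})"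
  proof (rule push[OF _ A])
    fix x assume x: "x \<in> A" "u \<le> x" "x < v"
    have "T x = \<beta>*x-1" by (rule T1) (use True uv x in linarith)+
    then show "\<beta>*x-1 \<in> A" using inv[OF x(1)] by simp
  qed (use b1 uv in auto)
  show ?thesis
  proof (intro exI conjI)
    show "0 \<le> \<beta>*u-1" using True b1 by (simp add: field_simps)
    show "\<beta>*u-1 < \<beta>* v-1" using uv b1 by simp
    show "\<beta>* v-1 \<le> 1" using uv b2 b1 mult_mono[of \<beta> 2 v 1] by linarith
    have "(1-\<theta>)*((\<beta>* v-1)-(\<beta>*u-1)) = \<beta>*((1-\<theta>)*(v-u))" by (simp add: algebra_simps)
    also have "\<dots> \<le> \<beta> * measure lborel (A \<inter> {u..<v})" using d b1 by simp
    finally show "(1-\<theta>)*((\<beta>* v-1)-(\<beta>*u-1)) \<le> measure lborel (A \<inter> {\<beta>*u-1..<\<beta>* v-1})" using p by linarith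
    show "\<beta>*(1-\<theta>)*(v-u) \<le> (\<beta>* v-1)-(\<beta>*u-1)" using th uv b1 by (simp add: algebra_simps)
  qed
next
  case False
  have epos: "0 < \<epsilon>" using th b1 by (smt (verit) zero_less_divide_iff)
  define w where "w = min v (1/\<beta>)"
  have uw: "u \<le> w" "w \<le> v" using False uv by (auto simp: w_def)
  have sp: "measure lborel (A \<inter> {u..<v}) = measure lborel (A \<inter> {u..<w}) + measure lborel (A \<inter> {w..<v})"
    by (rule msplit[OF A uw])
  have z: "measure lborel (A \<inter> {w..<v}) \<le> 0"
  proof (cases "w = v")
    case True then show ?thesis by simp
  next
    case wv: False
    then have w: "w = 1/\<beta>" "1/\<beta> < v" by (auto simp: w_def)
    have p: "\<beta> * measure lborel (A \<inter> {w..<v}) \<le> measure lborel (A \<inter> {\<beta>*w-1..<\<beta>* v-1})"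
    proof (rule push[OF _ A])
      fix x assume x: "x \<in> A" "w \<le> x" "x < v"
      have "T x = \<beta>*x-1" by (rule T1) (use w uv x in linarith)+
      then show "\<beta>*x-1 \<in> A" using inv[OF x(1)] by simp
    qed (use b1 uw in auto)
    have bw: "\<beta>*w-1 = 0" using w b1 by simp
    have q: "measure lborel (A \<inter> {\<beta>*w-1..<\<beta>* v-1}) \<le> max 0 (\<beta>* v-1-\<epsilon>)"
    proof (cases "\<epsilon> \<le> \<beta>* v-1")
      case True
      have "A \<inter> {\<beta>*w-1..<\<beta>* v-1} = A \<inter> {\<epsilon>..<\<beta>* v-1}" using hole bw epos by force
      then show ?thesis using mle[OF A True] by simp
    next
      case False
      have "A \<inter> {\<beta>*w-1..<\<beta>* v-1} = {}" using hole bw False epos by force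
      then show ?thesis by simp
    qed
    show ?thesis
    proof (rule ccontr)
      assume "\<not> ?thesis"
      then have pos: "0 < measure lborel (A \<inter> {w..<v})" by simp
      then have e: "\<epsilon> \<le> \<beta>* v - 1" using p q b1
        by (smt (verit) mult_pos_pos)
      have "\<beta> * measure lborel (A \<inter> {w..<v}) \<le> \<beta>* v-1-\<epsilon>" using p q e by simp
      then have "measure lborel (A \<inter> {w..<v}) \<le> (\<beta>* v-1-\<epsilon>)/\<beta>" using b1
        by (simp add: pos_le_divide_eq mult.commute)
      also have "(\<beta>* v-1-\<epsilon>)/\<beta> = v - w - \<epsilon>/\<beta>" using w(1) b1 by (simp add: field_simps)
      finally have m2: "measure lborel (A \<inter> {w..<v}) \<le> v - w - \<epsilon>/\<beta>" .
      have m1: "measure lborel (A \<inter> {u..<w}) \<le> w - u" by (rule mle[OF A uw(1)])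
      have "(1-\<theta>)*(v-u) \<le> v - u - \<epsilon>/\<beta>" using d sp m1 m2 by linarith
      then have "\<epsilon>/\<beta> \<le> \<theta>*(v-u)" by (simp add: algebra_simps)
      also have "\<dots> \<le> \<theta>" using th uv mult_left_mono[of "v-u" 1 \<theta>] by simp
      finally show False using th by simp
    qed
  qed
  have m1: "measure lborel (A \<inter> {u..<w}) \<le> w - u" by (rule mle[OF A uw(1)])
  have big: "(1-\<theta>)*(v-u) \<le> measure lborel (A \<inter> {u..<w})" using d sp z by linarith
  have p: "\<beta> * measure lborel (A \<inter> {u..<w}) \<le> measure lborel (A \<inter> {\<beta>*u-0..<\<beta>*w-0})"
  proof (rule push[OF _ A])
    fix x assume x: "x \<in> A" "u \<le> x" "x < w"
    have "x < 1/\<beta>" using x(3) by (simp add: w_def)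
    then have "T x = \<beta>*x" by (intro T0) (use uv x in linarith)+
    then show "\<beta>*x-0 \<in> A" using inv[OF x(1)] by simp
  qed (use b1 uw in auto)
  have pos: "0 < (1-\<theta>)*(v-u)" using th uv by simp
  show ?thesis
  proof (intro exI conjI)
    show "0 \<le> \<beta>*u" using b1 uv by simp
    show "\<beta>*(1-\<theta>)*(v-u) \<le> \<beta>*w - \<beta>*u"
    proof -
      have "(1-\<theta>)*(v-u) \<le> w-u" using big m1 by linarith
      then have "\<beta>*((1-\<theta>)*(v-u)) \<le> \<beta>*(w-u)" using b1 by simp
      then show ?thesis by (simp add: algebra_simps)
    qed
    moreover have "0 < \<beta>*(1-\<theta>)*(v-u)" using pos b1
      by (metis mult.assoc mult_pos_pos less_trans zero_less_one)
    ultimately show "\<beta>*u < \<beta>*w" by linarith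
    show "\<beta>*w \<le> 1" using b1 by (simp add: w_def min_def field_simps)
    have "(1-\<theta>)*(\<beta>*w - \<beta>*u) = \<beta>*((1-\<theta>)*(w-u))" by (simp add: algebra_simps)
    also have "\<dots> \<le> \<beta>*((1-\<theta>)*(v-u))" using b1 th uw by (simp add: mult_left_mono)
    also have "\<dots> \<le> \<beta> * measure lborel (A \<inter> {u..<w})" using big b1 by simp
    finally show "(1-\<theta>)*(\<beta>*w - \<beta>*u) \<le> measure lborel (A \<inter> {\<beta>*u..<\<beta>*w})" using p by simp
  qed
qed



lemma dyn:
  fixes A :: "real set" and T :: "real \<Rightarrow> real"
  assumes b1: "1 < \<beta>" and b2: "\<beta> \<le> 2" and A: "A \<in> sets borel" and inv: "\<And>x. x\<in>A \<Longrightarrow> T x \<in> A"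
   and hole: "\<And>x. x \<in> A \<Longrightarrow> \<epsilon> \<le> x"
   and T0: "\<And>x. 0 \<le> x \<Longrightarrow> x < 1/\<beta> \<Longrightarrow> T x = \<beta>*x"
   and T1: "\<And>x. 1/\<beta> \<le> x \<Longrightarrow> x < 1 \<Longrightarrow> T x = \<beta>*x - 1"
   and th: "0 < \<theta>" "\<theta> < \<epsilon>/\<beta>" "\<theta> < 1" "1 < \<beta>*(1-\<theta>)"
   and uv: "0 \<le> u" "u < v" "v \<le> 1"
  shows "measure lborel (A \<inter> {u..<v}) < (1-\<theta>)*(v-u)"
proof (rule ccontr)
  assume "\<not> ?thesis"
  then have d: "(1-\<theta>)*(v-u) \<le> measure lborel (A \<inter> {u..<v})" by simp
  let ?q = "\<beta>*(1-\<theta>)"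
  have "\<exists>u' v'. 0 \<le> u' \<and> u' < v' \<and> v' \<le> 1 \<and> (1-\<theta>)*(v'-u') \<le> measure lborel (A \<inter> {u'..<v'})
            \<and> ?q^n*(v-u) \<le> v'-u'" for n
  proof (induction n)
    case 0
    then show ?case using uv d by auto
  next
    case (Suc n)
    then obtain u' v' where h: "0 \<le> u'" "u' < v'" "v' \<le> 1" "(1-\<theta>)*(v'-u') \<le> measure lborel (A \<inter> {u'..<v'})"
      "?q^n*(v-u) \<le> v'-u'" by blast
    obtain u'' v'' where h2: "0 \<le> u''" "u'' < v''" "v'' \<le> 1" "(1-\<theta>)*(v''-u'') \<le> measure lborel (A \<inter> {u''..<v''})"
      "?q*(v'-u') \<le> v''-u''"
      using step[OF b1 b2 A inv hole T0 T1 th(1-3) h(1-4)] by blast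
    have "?q^Suc n*(v-u) = ?q*(?q^n*(v-u))" by simp
    also have "\<dots> \<le> ?q*(v'-u')" using h(5) th b1 by (intro mult_left_mono) auto
    finally show ?case using h2 by (meson order_trans)
  qed
  then have bnd: "?q^n*(v-u) \<le> 1" for n
    by (smt (verit))
  obtain n where "1/(v-u) < ?q^n" using real_arch_pow[OF th(4)] by blast
  then have "1 < ?q^n*(v-u)" using uv by (simp add: field_simps)
  then show False using bnd[of n] by simp
qed

lemma negl_borel: fixes X :: "real set"
  assumes "negligible X" "X \<in> sets borel" shows "emeasure lborel X = 0"
proof -
  have "X \<in> null_sets lebesgue" using assms negligible_iff_null_sets by blast
  then have "emeasure lebesgue X = 0" by auto
  then show ?thesis using assms(2) by (simp add: emeasure_completion)
qed

lemma vit: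
  fixes A :: "real set"
  assumes A: "A \<in> sets borel" and A01: "A \<subseteq> {0..1}" and th: "0 < \<theta>" "\<theta> < 1"
    and H: "\<And>u v. 0 \<le> u \<Longrightarrow> u < v \<Longrightarrow> v \<le> 1 \<Longrightarrow> measure lborel (A \<inter> {u..<v}) \<le> (1-\<theta>)*(v-u)"
  shows "emeasure lborel A = 0"
proof -
  define S where "S = A \<inter> {0<..<1}"
  have Sb: "S \<in> sets borel" using A by (simp add: S_def)
  have AS: "A \<subseteq> S \<union> {0,1}" using A01 by (auto simp: S_def)
  have Sfin: "emeasure lborel S < \<infinity>"
  proof -
    have "emeasure lborel S \<le> emeasure lborel {0..1::real}" by (rule emeasure_mono) (use A01 in \<open>auto simp: S_def\<close>)
    then show ?thesis by (simp add: order_le_less_trans)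
  qed
  define a where "a = measure lborel S"
  have Sa: "emeasure lborel S = ennreal a" using Sfin by (simp add: a_def emeasure_eq_ennreal_measure)
  have a0: "a \<ge> 0" by (simp add: a_def)
  have key: "a \<le> (1-\<theta>)*(a+e)" if e: "e > 0" for e
  proof -
    obtain U where U: "open U" "S \<subseteq> U" "emeasure lborel (U - S) < e"
      by (rule outer_regular_lborel[OF Sb e])
    define U' where "U' = U \<inter> {0<..<1}"
    have U'o: "open U'" using U by (simp add: U'_def open_Int)
    have SU': "S \<subseteq> U'" using U(2) unfolding S_def U'_def by blast
    define K where "K = {(x::real,d::real). 0 < d \<and> ball x d \<subseteq> U'}"
    have cov: "\<exists>i. i \<in> K \<and> x \<in> ball (fst i) (snd i) \<and> snd i < d" if "x \<in> S" "0 < d" for x d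
    proof -
      have xU: "x \<in> U'" using SU' that(1) by blast
      obtain r where r: "r > 0" "ball x r \<subseteq> U'" using openE[OF U'o xU] by blast
      show ?thesis
      proof (rule exI[of _ "(x, min r d / 2)"], intro conjI)
        have "ball x (min r d / 2) \<subseteq> ball x r" using r by (intro subset_ball) simp
        then show "(x, min r d / 2) \<in> K" using r that unfolding K_def by auto
      qed (use r that in auto)
    qed
    obtain C where C: "countable C" "C \<subseteq> K"
      "pairwise (\<lambda>i j. disjnt (ball (fst i) (snd i)) (ball (fst j) (snd j))) C"
      "negligible (S - (\<Union>i \<in> C. ball (fst i) (snd i)))"
      using Vitali_covering_theorem_balls[of S K fst snd, OF cov] by blast
    let ?B = "\<lambda>i. ball (fst i) (snd i)"
    have UBb: "(\<Union>i \<in> C. ?B i) \<in> sets borel"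
      by (rule sets.countable_UN'') (use C in auto)
    have n0: "emeasure lborel (S - (\<Union>i \<in> C. ?B i)) = 0"
      by (rule negl_borel[OF C(4)]) (use Sb UBb in auto)
    have disj: "disjoint_family_on ?B C"
      using C(3) unfolding disjoint_family_on_def pairwise_def disjnt_def by blast
    have disj2: "disjoint_family_on (\<lambda>i. S \<inter> ?B i) C"
      using disj unfolding disjoint_family_on_def by blast
    have ball_le: "emeasure lborel (S \<inter> ?B i) \<le> ennreal (1-\<theta>) * emeasure lborel (?B i)" if "i \<in> C" for i
    proof -
      obtain x d where i: "i = (x,d)" by force
      have d: "0 < d" "ball x d \<subseteq> U'" using that C(2) by (auto simp: K_def i)
      have bx: "ball x d = {x-d<..<x+d}" by (rule ball_eq_greaterThanLessThan)
      have "x \<in> ball x d" using d by simp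
      then have "x \<in> U'" using d(2) by blast
      then have x0: "0 < x" "x < 1" by (simp_all add: U'_def)
      have l: "0 \<le> x - d"
      proof (rule ccontr)
        assume "\<not> ?thesis"
        then have "(x-d)/2 \<in> ball x d" using d(1) x0 by (auto simp: bx)
        then show False using d(2) \<open>\<not> 0 \<le> x - d\<close> by (auto simp: U'_def)
      qed
      have r: "x + d \<le> 1"
      proof (rule ccontr)
        assume "\<not> ?thesis"
        then have "(x+d+1)/2 \<in> ball x d" using d(1) l x0 by (auto simp: bx)
        then show False using d(2) \<open>\<not> x + d \<le> 1\<close> by (auto simp: U'_def)
      qed
      have "emeasure lborel (S \<inter> ?B i) \<le> emeasure lborel (A \<inter> {x-d..<x+d})"
        by (rule emeasure_mono) (use A in \<open>auto simp: S_def i bx\<close>)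
      also have "\<dots> = ennreal (measure lborel (A \<inter> {x-d..<x+d}))"
      proof (rule emeasure_eq_ennreal_measure)
        have fmA: "A \<inter> {x-d..<x+d} \<in> fmeasurable lborel" by (rule fm_real[of _ "x-d" "x+d"]) (use A in auto)
        then show "emeasure lborel (A \<inter> {x-d..<x+d}) \<noteq> \<top>" by (simp add: fmeasurable_def less_top)
      qed
      also have "\<dots> \<le> ennreal ((1-\<theta>)*((x+d)-(x-d)))"
        using H[OF l _ r] d by (intro ennreal_leI) auto
      also have "\<dots> = ennreal (1-\<theta>) * emeasure lborel (?B i)"
        using d th by (simp add: i bx ennreal_mult)
      finally show ?thesis .
    qed
    have "emeasure lborel S \<le> emeasure lborel ((S \<inter> (\<Union>i \<in> C. ?B i)) \<union> (S - (\<Union>i \<in> C. ?B i)))"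
      by (rule emeasure_mono) (use Sb UBb in auto)
    also have "\<dots> \<le> emeasure lborel (S \<inter> (\<Union>i \<in> C. ?B i)) + emeasure lborel (S - (\<Union>i \<in> C. ?B i))"
      by (rule emeasure_subadditive) (use Sb UBb in auto)
    also have "\<dots> = emeasure lborel (\<Union>i \<in> C. S \<inter> ?B i)" using n0 by simp
    also have "\<dots> = (\<integral>\<^sup>+i. emeasure lborel (S \<inter> ?B i) \<partial>count_space C)"
      by (rule emeasure_UN_countable) (use C Sb disj2 in auto)
    also have "\<dots> \<le> (\<integral>\<^sup>+i. ennreal (1-\<theta>) * emeasure lborel (?B i) \<partial>count_space C)"
      by (rule nn_integral_mono) (use ball_le in auto)
    also have "\<dots> = ennreal (1-\<theta>) * (\<integral>\<^sup>+i. emeasure lborel (?B i) \<partial>count_space C)"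
      by (rule nn_integral_cmult) auto
    also have "(\<integral>\<^sup>+i. emeasure lborel (?B i) \<partial>count_space C) = emeasure lborel (\<Union>i \<in> C. ?B i)"
      by (rule emeasure_UN_countable[symmetric]) (use C disj in auto)
    also have "emeasure lborel (\<Union>i \<in> C. ?B i) \<le> emeasure lborel U"
    proof (rule emeasure_mono)
      show "(\<Union>i \<in> C. ?B i) \<subseteq> U"
      proof
        fix y assume "y \<in> (\<Union>i \<in> C. ?B i)"
        then obtain i where i: "i \<in> C" "y \<in> ?B i" by blast
        then have "i \<in> K" using C(2) by blast
        then have "?B i \<subseteq> U'" by (cases i) (simp add: K_def)
        then show "y \<in> U" using i(2) by (auto simp: U'_def)
      qed
    qed (use U borel_open in auto)
    also have "emeasure lborel U \<le> emeasure lborel S + emeasure lborel (U - S)"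
    proof -
      have "emeasure lborel U \<le> emeasure lborel (S \<union> (U - S))" by (rule emeasure_mono) (use Sb U borel_open in auto)
      also have "\<dots> \<le> emeasure lborel S + emeasure lborel (U - S)"
        by (rule emeasure_subadditive) (use Sb U borel_open in auto)
      finally show ?thesis .
    qed
    also have "\<dots> \<le> ennreal a + ennreal e" using U(3) Sa by (simp add: add_left_mono less_imp_le)
    finally have "ennreal a \<le> ennreal (1-\<theta>) * (ennreal a + ennreal e)"
      using Sa by (simp add: mult_left_mono)
    also have "\<dots> = ennreal ((1-\<theta>)*(a+e))" using a0 e th by (simp add: ennreal_plus ennreal_mult)
    finally show ?thesis using th a0 e by (subst (asm) ennreal_le_iff) auto
  qed
  have a00: "a = 0"
  proof (rule ccontr)
    assume "a \<noteq> 0"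
    then have ap: "a > 0" using a0 by simp
    have "a \<le> (1-\<theta>)*(a + \<theta>*a/2)" using key[of "\<theta>*a/2"] ap th by simp
    moreover have "(1-\<theta>)*(a + \<theta>*a/2) < a"
    proof -
      have "(1-\<theta>)*(a + \<theta>*a/2) = a - \<theta>*a/2 - \<theta>*\<theta>*a/2" by (simp add: field_simps)
      moreover have "0 < \<theta>*a/2" using ap th by simp
      moreover have "0 \<le> \<theta>*\<theta>*a/2" using ap th by simp
      ultimately show ?thesis by linarith
    qed
    ultimately show False by simp
  qed
  have "emeasure lborel A \<le> emeasure lborel (S \<union> {0,1})" by (rule emeasure_mono[OF AS]) (use Sb in auto)
  also have "\<dots> \<le> emeasure lborel S + emeasure lborel {0,1::real}"
    by (rule emeasure_subadditive) (use Sb in auto)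
  also have "emeasure lborel {0,1::real} = 0"
    by (rule countable_imp_null_set_lborel[THEN null_setsD1]) auto
  finally show ?thesis using Sa a00 by simp
qed



lemma bm_range: "0 \<le> beta_map \<beta> x \<and> beta_map \<beta> x < 1"
  unfolding beta_map_def by (simp add: floor_le_iff) linarith

lemma bm0: assumes "0 < \<beta>" "0 \<le> x" "x < 1/\<beta>" shows "beta_map \<beta> x = \<beta>*x"
proof -
  have "0 \<le> \<beta>*x" "\<beta>*x < 1" using assms by (auto simp: field_simps)
  then have "\<lfloor>\<beta>*x\<rfloor> = 0" by (simp add: floor_eq_iff)
  then show ?thesis by (simp add: beta_map_def)
qed

lemma bm1: assumes "1 < \<beta>" "\<beta> \<le> 2" "1/\<beta> \<le> x" "x < 1" shows "beta_map \<beta> x = \<beta>*x - 1"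
proof -
  have a: "1 \<le> \<beta>*x" using assms by (auto simp: field_simps)
  have "\<beta>*x < \<beta>*1" by (rule mult_strict_left_mono) (use assms in auto)
  then have "\<beta>*x < 2" using assms by linarith
  with a have "\<lfloor>\<beta>*x\<rfloor> = 1" by (simp add: floor_eq_iff)
  then show ?thesis by (simp add: beta_map_def)
qed

lemma bm_meas[measurable]: "beta_map \<beta> \<in> borel_measurable borel"
  unfolding beta_map_def by measurable

lemma bm_pre: assumes "1 < \<beta>" "\<beta> \<le> 2" "0 \<le> x" "x \<le> 1" "beta_map \<beta> x = y"
  shows "x \<in> {y/\<beta>, (y+1)/\<beta>, (y+2)/\<beta>}"
proof -
  have "0 \<le> \<beta>*x" "\<beta>*x \<le> 2" using assms mult_mono[of \<beta> 2 x 1] by auto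
  then have f: "0 \<le> \<lfloor>\<beta>*x\<rfloor>" "\<lfloor>\<beta>*x\<rfloor> \<le> 2" by (auto simp: floor_le_numeral)
  have i: "(k::int) \<ge> 0 \<Longrightarrow> k \<le> 2 \<Longrightarrow> k \<in> {0,1,2}" for k by auto
  have "\<lfloor>\<beta>*x\<rfloor> \<in> {0,1,2}" using i[OF f] .
  moreover have "x = (y + \<lfloor>\<beta>*x\<rfloor>)/\<beta>" using assms(1,5) by (simp add: beta_map_def field_simps)
  ultimately show ?thesis by auto
qed

lemma fin_pre: assumes "1 < \<beta>" "\<beta> \<le> 2"
  shows "finite {x\<in>{0..1}. (beta_map \<beta> ^^ k) x = y}"
proof (induction k arbitrary: y)
  case 0
  have "{x\<in>{0..1::real}. (beta_map \<beta> ^^ 0) x = y} \<subseteq> {y}" by auto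
  then show ?case using finite_subset by blast
next
  case (Suc k)
  let ?F = "{x\<in>{0..1}. (beta_map \<beta> ^^ k) x = y}"
  have "{x\<in>{0..1}. (beta_map \<beta> ^^ Suc k) x = y} \<subseteq> (\<Union>z\<in>?F. {z/\<beta>, (z+1)/\<beta>, (z+2)/\<beta>})"
  proof
    fix x assume x: "x \<in> {x\<in>{0..1}. (beta_map \<beta> ^^ Suc k) x = y}"
    let ?z = "beta_map \<beta> x"
    have "?z \<in> ?F" using x bm_range[of \<beta> x] by (auto simp: funpow_Suc_right simp del: funpow.simps)
    moreover have "x \<in> {?z/\<beta>, (?z+1)/\<beta>, (?z+2)/\<beta>}" using bm_pre[OF assms, of x ?z] x by auto
    ultimately show "x \<in> (\<Union>z\<in>?F. {z/\<beta>, (z+1)/\<beta>, (z+2)/\<beta>})" by blast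
  qed
  moreover have "finite (\<Union>z\<in>?F. {z/\<beta>, (z+1)/\<beta>, (z+2)/\<beta>})" using Suc.IH by auto
  ultimately show ?case using finite_subset by blast
qed

lemma tele: assumes "\<And>n. a n = c + b (Suc n) - (b n :: real)"
  shows "(\<Sum>i<K. a (j+i)) = real K * c + b (j+K) - b j"
  by (induction K) (auto simp: assms algebra_simps)

lemma acim_facts:
  assumes "is_beta_acim \<beta> m"
  shows "prob_space m" "space m = {0..1}" "sets m = sets (restrict_space borel {0..1})"
    "null_sets (restrict_space lborel {0..1}) \<subseteq> null_sets m"
    "beta_map \<beta> \<in> measurable m m"
    "\<And>A. A \<in> sets m \<Longrightarrow> emeasure m (beta_map \<beta> -` A \<inter> space m) = emeasure m A"
  using assms unfolding is_beta_acim_def absolutely_continuous_def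
  by (auto dest: sets_eq_imp_space_eq)

lemma AE_shift:
  assumes "is_beta_acim \<beta> m" "AE x in m. P x"
  shows "AE x in m. P (beta_map \<beta> x)"
proof -
  note f = acim_facts[OF assms(1)]
  obtain N where N: "{x \<in> space m. \<not> P x} \<subseteq> N" "emeasure m N = 0" "N \<in> sets m"
    using assms(2) by (rule AE_E)
  let ?N = "beta_map \<beta> -` N \<inter> space m"
  have "?N \<in> sets m" using measurable_sets[OF f(5) N(3)] .
  moreover have "emeasure m ?N = 0" using f(6)[OF N(3)] N(2) by simp
  moreover have "{x \<in> space m. \<not> P (beta_map \<beta> x)} \<subseteq> ?N"
    using N(1) measurable_space[OF f(5)] by auto
  ultimately show ?thesis by (intro AE_I'[of ?N]) auto
qed

lemma null_contra:
  assumes "is_beta_acim \<beta> m" "Z \<subseteq> {0..1}" "Z \<in> sets borel" "emeasure lborel Z = 0"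
    "AE x in m. x \<in> Z"
  shows False
proof -
  note f = acim_facts[OF assms(1)]
  have "Z \<in> null_sets (restrict_space lborel {0..1})"
    using assms by (subst null_sets_restrict_space) auto
  then have "Z \<in> null_sets m" using f(4) by blast
  then have "AE x in m. x \<notin> Z" by (rule AE_not_in)
  with assms(5) have "AE x in m. False" by eventually_elim auto
  then show False using prob_space.AE_False[OF f(1)] by simp
qed



lemma bv_bound:
  assumes "bounded_variation_on \<psi> 0 1"
  obtains B where "\<And>y z. y \<in> {0..1} \<Longrightarrow> z \<in> {0..1} \<Longrightarrow> \<bar>\<psi> y - \<psi> z\<bar> \<le> 2*B"
proof -
  obtain B where B: "\<forall>(n::nat) (x::nat \<Rightarrow> real). x 0 = 0 \<and> x n = 1 \<and> (\<forall>i<n. x i \<le> x (Suc i)) \<longrightarrow>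
        (\<Sum>i<n. \<bar>\<psi> (x (Suc i)) - \<psi> (x i)\<bar>) \<le> B"
    using assms unfolding bounded_variation_on_def by blast
  have one: "\<bar>\<psi> t - \<psi> 0\<bar> \<le> B" if t: "t \<in> {0..1}" for t
  proof -
    define x where "x = (\<lambda>i::nat. if i = 0 then 0 else if i = 1 then t else (1::real))"
    have "x 0 = 0" "x 2 = 1" by (simp_all add: x_def)
    moreover have "\<forall>i<2. x i \<le> x (Suc i)"
    proof (intro allI impI)
      fix i :: nat assume "i < 2"
      then have "i = 0 \<or> i = 1" by auto
      then show "x i \<le> x (Suc i)" using t by (auto simp: x_def)
    qed
    ultimately have "(\<Sum>i<2. \<bar>\<psi> (x (Suc i)) - \<psi> (x i)\<bar>) \<le> B" using B by blast
    then have "\<bar>\<psi> t - \<psi> 0\<bar> + \<bar>\<psi> 1 - \<psi> t\<bar> \<le> B" by (simp add: numeral_2_eq_2 x_def)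
    then show ?thesis by linarith
  qed
  show ?thesis
  proof (rule that)
    fix y z :: real assume "y \<in> {0..1}" "z \<in> {0..1}"
    then show "\<bar>\<psi> y - \<psi> z\<bar> \<le> 2*B" using one[of y] one[of z] by linarith
  qed
qed

lemma orb: "x \<in> {0..1} \<Longrightarrow> (beta_map \<beta> ^^ n) x \<in> {0..1}"
  by (induction n) (use bm_range in \<open>auto simp: less_imp_le\<close>)

theorem mainTheorem8:
  fixes \<beta> :: real and m :: "real measure"
  assumes "1 < \<beta>" and "\<beta> \<le> 2"
    and "is_beta_acim \<beta> m"
  shows "\<not> (\<exists>(c::real) (\<psi>::real \<Rightarrow> real).
            bounded_variation_on \<psi> 0 1 \<and>
            (AE x in m. indicator {1/\<beta>..1} x = c + \<psi> (beta_map \<beta> x) - \<psi> x))"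
proof
  assume "\<exists>(c::real) (\<psi>::real \<Rightarrow> real). bounded_variation_on \<psi> 0 1 \<and>
            (AE x in m. indicator {1/\<beta>..1} x = c + \<psi> (beta_map \<beta> x) - \<psi> x)"
  then obtain c :: real and \<psi> :: "real \<Rightarrow> real" where bv: "bounded_variation_on \<psi> 0 1"
    and ae: "AE x in m. indicator {1/\<beta>..1} x = c + \<psi> (beta_map \<beta> x) - \<psi> x" by blast
  note f = acim_facts[OF assms(3)]
  obtain B where psib: "\<And>y z. y \<in> {0..1} \<Longrightarrow> z \<in> {0..1} \<Longrightarrow> \<bar>\<psi> y - \<psi> z\<bar> \<le> 2*B"
    using bv_bound[OF bv] by blast
  define T where "T = beta_map \<beta>"
  define ind where "ind = (\<lambda>y. indicator {1/\<beta>..1} y :: real)"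
  define E where "E = (\<lambda>y. ind y = c + \<psi> (T y) - \<psi> y)"
  have ae0: "AE x in m. E x" using ae by (simp add: E_def ind_def T_def)
  have aen: "AE x in m. E ((T^^n) x)" for n
  proof (induction n)
    case 0 then show ?case using ae0 by simp
  next
    case (Suc n)
    from AE_shift[OF assms(3) Suc] show ?case
      by (simp add: funpow_Suc_right T_def del: funpow.simps)
  qed
  have aeall: "AE x in m. x \<in> {0..1} \<and> (\<forall>n. E ((T^^n) x))"
  proof -
    have "AE x in m. \<forall>n. E ((T^^n) x)" using aen by (simp add: AE_all_countable)
    then show ?thesis by (rule AE_mp) (rule AE_I2, use f(2) in auto)
  qed
  have orbT: "x \<in> {0..1} \<Longrightarrow> (T^^n) x \<in> {0..1}" for x n unfolding T_def by (rule orb)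
  have tel: "(\<Sum>i<K. ind ((T^^(j+i)) x)) = real K * c + \<psi> ((T^^(j+K)) x) - \<psi> ((T^^j) x)"
    if "\<forall>n. E ((T^^n) x)" for x K j
  proof (rule tele)
    fix n
    have "E ((T^^n) x)" using that by blast
    then show "ind ((T^^n) x) = c + \<psi> ((T^^Suc n) x) - \<psi> ((T^^n) x)" by (simp add: E_def)
  qed
  have indnn: "0 \<le> ind y" for y by (simp add: ind_def)
  show False
  proof (cases "c \<le> 0")
    case True
    define Z where "Z = (\<Union>k. {x\<in>{0..1}. (T^^k) x = 0})"
    have Zc: "countable Z" unfolding Z_def T_def
      by (rule countable_UN[OF countableI_type]) (rule countable_finite[OF fin_pre[OF assms(1,2)]])
    have Z01: "Z \<subseteq> {0..1}" by (auto simp: Z_def)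
    have Zb: "Z \<in> sets borel" by (rule sets.countable[OF _ Zc]) auto
    have Z0: "emeasure lborel Z = 0" using countable_imp_null_set_lborel[OF Zc] by auto
    have "AE x in m. x \<in> Z"
      using aeall
    proof eventually_elim
      case (elim x)
      then have x01: "x \<in> {0..1}" and g: "\<forall>n. E ((T^^n) x)" by auto
      have sb: "(\<Sum>i<n. ind ((T^^i) x)) \<le> 2*B" for n
      proof -
        have "(\<Sum>i<n. ind ((T^^(0+i)) x)) = real n * c + \<psi> ((T^^(0+n)) x) - \<psi> ((T^^0) x)"
          by (rule tel[OF g])
        moreover have "real n * c \<le> 0" using True by (simp add: mult_nonneg_nonpos)
        moreover have "\<bar>\<psi> ((T^^n) x) - \<psi> x\<bar> \<le> 2*B" using psib orbT[OF x01] x01 by blast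
        ultimately show ?thesis by simp
      qed
      show "x \<in> Z"
      proof (rule ccontr)
        assume nZ: "x \<notin> Z"
        then have nz: "(T^^k) x \<noteq> 0" for k using x01 by (auto simp: Z_def)
        have inf: "\<exists>j\<ge>k. 1/\<beta> \<le> (T^^j) x" for k
        proof (rule ccontr)
          assume "\<not> ?thesis"
          then have lt: "\<And>j. j \<ge> k \<Longrightarrow> (T^^j) x < 1/\<beta>" by force
          define y where "y = (T^^k) x"
          have y01: "y \<in> {0..1}" using orbT[OF x01] by (simp add: y_def)
          have ypos: "0 < y" using nz[of k] y01 by (auto simp: y_def)
          have pw: "(T^^(k+i)) x = \<beta>^i * y" for i
          proof (induction i)
            case 0 then show ?case by (simp add: y_def)
          next
            case (Suc i)
            have "(T^^(k+Suc i)) x = T ((T^^(k+i)) x)" by simp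
            also have "\<dots> = T (\<beta>^i * y)" using Suc.IH by simp
            also have "\<dots> = \<beta> * (\<beta>^i * y)" unfolding T_def
              by (rule bm0) (use assms(1) ypos lt[of "k+i"] Suc.IH in auto)
            finally show ?case by simp
          qed
          obtain n where n: "1/(\<beta>*y) < \<beta>^n" using real_arch_pow[OF assms(1)] by blast
          have "\<beta>^n * y < 1/\<beta>" using lt[of "k+n"] pw[of n] by simp
          then have "\<beta>^n * y * \<beta> < 1" using assms(1) by (simp add: field_simps)
          moreover have "1 < \<beta>^n * (\<beta>*y)" using n ypos assms(1) by (simp add: field_simps)
          ultimately show False by (simp add: algebra_simps)
        qed
        have grow: "\<exists>n. real N \<le> (\<Sum>i<n. ind ((T^^i) x))" for N
        proof (induction N)
          case 0 then show ?case by (auto intro: exI[of _ 0])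
        next
          case (Suc N)
          then obtain n where n: "real N \<le> (\<Sum>i<n. ind ((T^^i) x))" by blast
          obtain j where j: "j \<ge> n" "1/\<beta> \<le> (T^^j) x" using inf by blast
          have "ind ((T^^j) x) = 1" using j(2) orbT[OF x01, of j] by (simp add: ind_def)
          moreover have "(\<Sum>i<n. ind ((T^^i) x)) \<le> (\<Sum>i<j. ind ((T^^i) x))"
            by (rule sum_mono2) (use j(1) indnn in auto)
          ultimately have "real (Suc N) \<le> (\<Sum>i<Suc j. ind ((T^^i) x))" using n by simp
          then show ?case by blast
        qed
        obtain N :: nat where "2*B < real N" using reals_Archimedean2 by blast
        then show False using grow[of N] sb by (meson le_less_trans not_le order_trans)
      qed
    qed
    then show False by (rule null_contra[OF assms(3) Z01 Zb Z0])
  next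
    case False
    then have cpos: "0 < c" by simp
    obtain K :: nat where K: "2*B/c < real K" using reals_Archimedean2 by blast
    then have Kc: "2*B < real K * c" using cpos by (simp add: field_simps)
    define \<epsilon> where "\<epsilon> = 1/\<beta>^K"
    have epos: "0 < \<epsilon>" using assms(1) by (simp add: \<epsilon>_def)
    define A where "A = {x\<in>{0..1}. \<forall>j. \<epsilon> \<le> (T^^j) x}"
    have A01: "A \<subseteq> {0..1}" by (auto simp: A_def)
    have Tm: "(T^^j) \<in> borel_measurable borel" for j
      unfolding T_def by (rule measurable_compose_n[OF bm_meas])
    have Ab: "A \<in> sets borel"
    proof -
      have "A = {0..1} \<inter> (\<Inter>j. (T^^j) -` {\<epsilon>..})" by (auto simp: A_def)
      moreover have "(T^^j) -` {\<epsilon>..} \<in> sets borel" for j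
        using measurable_sets[OF Tm[of j], of "{\<epsilon>..}"] by simp
      ultimately show ?thesis by auto
    qed
    have Ainv: "T x \<in> A" if "x \<in> A" for x
    proof -
      have "T x \<in> {0..1}" using bm_range[of \<beta> x] by (auto simp: T_def)
      moreover have "\<epsilon> \<le> (T^^j) (T x)" for j
        using that unfolding A_def by (auto simp: funpow_Suc_right simp del: funpow.simps dest: spec[of _ "Suc j"])
      ultimately show ?thesis by (simp add: A_def)
    qed
    have Ahole: "\<epsilon> \<le> x" if "x \<in> A" for x
      using that unfolding A_def by (auto dest: spec[of _ 0])
    define mm where "mm = min (\<epsilon>/\<beta>) (1-1/\<beta>)"
    define \<theta> where "\<theta> = mm / 2"
    have b0: "0 < 1 - 1/\<beta>" using assms(1) by simp
    have th: "0 < \<theta>" "\<theta> < \<epsilon>/\<beta>" "\<theta> < 1" "1 < \<beta>*(1-\<theta>)"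
    proof -
      have e0: "0 < \<epsilon>/\<beta>" using epos assms(1) by simp
      have m1: "mm \<le> \<epsilon>/\<beta>" "mm \<le> 1-1/\<beta>" "0 < mm" using e0 b0 by (auto simp: mm_def)
      show "0 < \<theta>" using m1 unfolding \<theta>_def by linarith
      show "\<theta> < \<epsilon>/\<beta>" using m1 e0 unfolding \<theta>_def by linarith
      have t2: "\<theta> < 1 - 1/\<beta>" using m1 b0 unfolding \<theta>_def by linarith
      then show "\<theta> < 1" using assms(1) by (smt (verit) divide_pos_pos)
      have "1/\<beta> < 1 - \<theta>" using t2 by simp
      then show "1 < \<beta>*(1-\<theta>)" using assms(1) by (simp add: field_simps)
    qed
    have T0: "T x = \<beta>*x" if "0 \<le> x" "x < 1/\<beta>" for x
      unfolding T_def by (rule bm0) (use assms(1) that in auto)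
    have T1: "T x = \<beta>*x - 1" if "1/\<beta> \<le> x" "x < 1" for x
      unfolding T_def by (rule bm1) (use assms that in auto)
    have H: "measure lborel (A \<inter> {u..<v}) \<le> (1-\<theta>)*(v-u)" if "0 \<le> u" "u < v" "v \<le> 1" for u v
      using dyn[OF assms(1,2) Ab Ainv Ahole T0 T1 th that] by simp
    have A0: "emeasure lborel A = 0" by (rule vit[OF Ab A01 th(1,3) H])
    have "AE x in m. x \<in> A"
      using aeall
    proof eventually_elim
      case (elim x)
      then have x01: "x \<in> {0..1}" and g: "\<forall>n. E ((T^^n) x)" by auto
      show "x \<in> A"
      proof (rule ccontr)
        assume "x \<notin> A"
        then obtain j where j: "(T^^j) x < \<epsilon>" using x01 by (auto simp: A_def not_le)
        define y where "y = (T^^j) x"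
        have y01: "y \<in> {0..1}" using orbT[OF x01] by (simp add: y_def)
        have yl: "y < \<epsilon>" using j by (simp add: y_def)
        have small: "\<beta>^i * y < 1/\<beta>" if "i < K" for i
        proof -
          have "\<beta>^(Suc i) \<le> \<beta>^K" using that assms(1) by (intro power_increasing) auto
          then have "\<beta>^(Suc i) * y \<le> \<beta>^K * y" using y01 by (intro mult_right_mono) auto
          also have "\<beta>^K * y < \<beta>^K * \<epsilon>" using yl assms(1) by simp
          also have "\<beta>^K * \<epsilon> = 1" using assms(1) by (simp add: \<epsilon>_def)
          finally have "\<beta> * (\<beta>^i * y) < 1" by simp
          then show ?thesis using assms(1) by (simp add: field_simps)
        qed
        have pw: "i \<le> K \<longrightarrow> (T^^(j+i)) x = \<beta>^i * y" for i
        proof (induction i)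
          case 0 then show ?case by (simp add: y_def)
        next
          case (Suc i)
          show ?case
          proof
            assume "Suc i \<le> K"
            then have ik: "i < K" by simp
            then have e: "(T^^(j+i)) x = \<beta>^i * y" using Suc by simp
            have "(T^^(j+Suc i)) x = T ((T^^(j+i)) x)" by simp
            also have "\<dots> = \<beta> * (\<beta>^i * y)" unfolding e
              by (rule T0) (use y01 small[OF ik] assms(1) in auto)
            finally show "(T^^(j+Suc i)) x = \<beta>^(Suc i) * y" by simp
          qed
        qed
        have "(\<Sum>i<K. ind ((T^^(j+i)) x)) = 0"
        proof (rule sum.neutral, intro ballI)
          fix i assume "i \<in> {..<K}"
          then have "(T^^(j+i)) x < 1/\<beta>" using pw[of i] small[of i] by simp
          then show "ind ((T^^(j+i)) x) = 0" by (simp add: ind_def)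
        qed
        moreover have "(\<Sum>i<K. ind ((T^^(j+i)) x)) = real K * c + \<psi> ((T^^(j+K)) x) - \<psi> ((T^^j) x)"
          by (rule tel[OF g])
        moreover have "\<bar>\<psi> ((T^^(j+K)) x) - \<psi> ((T^^j) x)\<bar> \<le> 2*B" using psib orbT[OF x01] by blast
        ultimately show False using Kc by linarith
      qed
    qed
    then show False by (rule null_contra[OF assms(3) A01 Ab A0])
  qed
qed

end
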